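(* Let $\mathfrak{n}$ be the real $7$-dimensional Lie algebra with basis $e_1,\dots,e_7$ whose nonzero brackets (up to antisymmetry) are $[e_1,e_2]=e_4$, $[e_1,e_3]=e_5$, $[e_1,e_4]=e_6$, $[e_1,e_6]=e_7$, $[e_2,e_3]=e_6$, $[e_2,e_4]=e_7$, $[e_2,e_5]=\tfrac12 e_7$, $[e_3,e_4]=-\tfrac12 e_7$. Then $\mathfrak{n}$ is not an Einstein nilradical.
   Context: A real nilpotent Lie algebra $\mathfrak{n}$ is called an Einstein nilradical if it admits an inner product such that the left-invariant Riemannian metric it defines on the simply connected nilpotent Lie group with Lie algebra $\mathfrak{n}$ is a nilsoliton, i.e. its Ricci operator satisfies $\mathrm{Ric}=c\,\mathrm{Id}+D$ for some $c\in\mathbb{R}$ and some derivation $D$ of $\mathfrak{n}$. Brackets of basis elements not listed are zero. *)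

theory Defs
  imports "HOL-Analysis.Analysis"
begin

definition is_inner_product :: "('a::real_vector \<Rightarrow> 'a \<Rightarrow> real) \<Rightarrow> bool" where
  "is_inner_product ip \<longleftrightarrow> bilinear ip \<and> (\<forall>x y. ip x y = ip y x) \<and> (\<forall>x. x \<noteq> 0 \<longrightarrow> ip x x > 0)"

text \<open>Levi-Civita connection of the left-invariant metric, on left-invariant fields,
  given by the Koszul formula
  2<nabla_X Y, Z> = <[X,Y],Z> - <[Y,Z],X> + <[Z,X],Y>.\<close>
definition lc_conn ::
  "('a::real_vector \<Rightarrow> 'a \<Rightarrow> 'a) \<Rightarrow> ('a \<Rightarrow> 'a \<Rightarrow> real) \<Rightarrow> 'a \<Rightarrow> 'a \<Rightarrow> 'a" where
  "lc_conn br ip X Y = (THE W. \<forall>Z. ip W Z =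
      (ip (br X Y) Z - ip (br Y Z) X + ip (br Z X) Y) / 2)"

definition curv ::
  "('a::real_vector \<Rightarrow> 'a \<Rightarrow> 'a) \<Rightarrow> ('a \<Rightarrow> 'a \<Rightarrow> real) \<Rightarrow> 'a \<Rightarrow> 'a \<Rightarrow> 'a \<Rightarrow> 'a" where
  "curv br ip X Y Z = lc_conn br ip X (lc_conn br ip Y Z) - lc_conn br ip Y (lc_conn br ip X Z)
      - lc_conn br ip (br X Y) Z"

definition trace_op :: "(real^'n \<Rightarrow> real^'n) \<Rightarrow> real" where
  "trace_op f = (\<Sum>i\<in>UNIV. f (axis i 1) $ i)"

definition ric_tensor ::
  "(real^'n \<Rightarrow> real^'n \<Rightarrow> real^'n) \<Rightarrow> (real^'n \<Rightarrow> real^'n \<Rightarrow> real) \<Rightarrow> real^'n \<Rightarrow> real^'n \<Rightarrow> real" where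
  "ric_tensor br ip Y Z = trace_op (\<lambda>X. curv br ip X Y Z)"

definition is_derivation :: "('a::real_vector \<Rightarrow> 'a \<Rightarrow> 'a) \<Rightarrow> ('a \<Rightarrow> 'a) \<Rightarrow> bool" where
  "is_derivation br D \<longleftrightarrow> linear D \<and> (\<forall>x y. D (br x y) = br (D x) y + br x (D y))"

text \<open>Nilsoliton: the Ricci operator Ric (defined by <Ric Y, Z> = ric(Y,Z)) equals c Id + D
  for some real c and some derivation D.\<close>
definition is_nilsoliton ::
  "(real^'n \<Rightarrow> real^'n \<Rightarrow> real^'n) \<Rightarrow> (real^'n \<Rightarrow> real^'n \<Rightarrow> real) \<Rightarrow> bool" where
  "is_nilsoliton br ip \<longleftrightarrow> (\<exists>c D. is_derivation br D \<and>
      (\<forall>Y Z. ric_tensor br ip Y Z = ip (c *\<^sub>R Y + D Y) Z))"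

definition einstein_nilradical :: "(real^'n \<Rightarrow> real^'n \<Rightarrow> real^'n) \<Rightarrow> bool" where
  "einstein_nilradical br \<longleftrightarrow> (\<exists>ip. is_inner_product ip \<and> is_nilsoliton br ip)"

definition ebas :: "nat \<Rightarrow> real^7" where
  "ebas k = axis (of_nat (k - 1)) 1"

definition coord :: "nat \<Rightarrow> real^7 \<Rightarrow> real" where
  "coord k x = x $ (of_nat (k - 1))"

definition cpos :: "nat \<Rightarrow> nat \<Rightarrow> real^7" where
  "cpos i j =
    (if (i, j) = (1, 2) then ebas 4
     else if (i, j) = (1, 3) then ebas 5
     else if (i, j) = (1, 4) then ebas 6
     else if (i, j) = (1, 6) then ebas 7
     else if (i, j) = (2, 3) then ebas 6
     else if (i, j) = (2, 4) then ebas 7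
     else if (i, j) = (2, 5) then (1/2) *\<^sub>R ebas 7
     else if (i, j) = (3, 4) then (- 1/2) *\<^sub>R ebas 7
     else 0)"

definition cbr :: "nat \<Rightarrow> nat \<Rightarrow> real^7" where
  "cbr i j = (if i < j then cpos i j else if j < i then - cpos j i else 0)"

definition nbr :: "real^7 \<Rightarrow> real^7 \<Rightarrow> real^7" where
  "nbr x y = (\<Sum>i\<in>{1..7}. \<Sum>j\<in>{1..7}. (coord i x * coord j y) *\<^sub>R cbr i j)"

end

theory Submission
  imports Defs
begin

declare One_nat_def [simp del]

lemma sum7: "sum f {1..7::nat} = f 1 + f 2 + f 3 + f 4 + f 5 + f 6 + f 7"
  by (simp add: numeral_eq_Suc add.assoc One_nat_def)

lemma all7: "(\<forall>k\<in>{1..7::nat}. P k) \<longleftrightarrow> P 1 \<and> P 2 \<and> P 3 \<and> P 4 \<and> P 5 \<and> P 6 \<and> P 7"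
proof -
  have "{1..7::nat} = {1,2,3,4,5,6,7}" by auto
  then show ?thesis by simp
qed

lemma exhaust_7:
  fixes x :: 7
  shows "x = 0 \<or> x = 1 \<or> x = 2 \<or> x = 3 \<or> x = 4 \<or> x = 5 \<or> x = 6"
proof (induct x)
  case (of_int z)
  then have "z = 0 \<or> z = 1 \<or> z = 2 \<or> z = 3 \<or> z = 4 \<or> z = 5 \<or> z = 6" by fastforce
  then show ?case by auto
qed

lemma vec_eq7:
  assumes "\<forall>k\<in>{1..7}. coord k x = coord k y"
  shows "x = y"
proof -
  have "x $ i = y $ i" for i
    using exhaust_7[of i] assms unfolding all7 coord_def by auto
  then show ?thesis by (simp add: vec_eq_iff)
qed

lemma coord_add[simp]: "coord k (x + y) = coord k x + coord k y"
  and coord_diff[simp]: "coord k (x - y) = coord k x - coord k y"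
  and coord_scale[simp]: "coord k (c *\<^sub>R x) = c * coord k x"
  and coord_neg[simp]: "coord k (- x) = - coord k x"
  and coord_zero[simp]: "coord k 0 = 0"
  by (simp_all add: coord_def)

lemma coord_sum[simp]: "coord k (sum f S) = (\<Sum>i\<in>S. coord k (f i))"
  by (simp add: coord_def sum_component)

lemma coord_ebas[simp]:
  "coord 1 (ebas 1) = 1" "coord 2 (ebas 1) = 0" "coord 3 (ebas 1) = 0" "coord 4 (ebas 1) = 0"
  "coord 5 (ebas 1) = 0" "coord 6 (ebas 1) = 0" "coord 7 (ebas 1) = 0"
  "coord 1 (ebas 2) = 0" "coord 2 (ebas 2) = 1" "coord 3 (ebas 2) = 0" "coord 4 (ebas 2) = 0"
  "coord 5 (ebas 2) = 0" "coord 6 (ebas 2) = 0" "coord 7 (ebas 2) = 0"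
  "coord 1 (ebas 3) = 0" "coord 2 (ebas 3) = 0" "coord 3 (ebas 3) = 1" "coord 4 (ebas 3) = 0"
  "coord 5 (ebas 3) = 0" "coord 6 (ebas 3) = 0" "coord 7 (ebas 3) = 0"
  "coord 1 (ebas 4) = 0" "coord 2 (ebas 4) = 0" "coord 3 (ebas 4) = 0" "coord 4 (ebas 4) = 1"
  "coord 5 (ebas 4) = 0" "coord 6 (ebas 4) = 0" "coord 7 (ebas 4) = 0"
  "coord 1 (ebas 5) = 0" "coord 2 (ebas 5) = 0" "coord 3 (ebas 5) = 0" "coord 4 (ebas 5) = 0"
  "coord 5 (ebas 5) = 1" "coord 6 (ebas 5) = 0" "coord 7 (ebas 5) = 0"
  "coord 1 (ebas 6) = 0" "coord 2 (ebas 6) = 0" "coord 3 (ebas 6) = 0" "coord 4 (ebas 6) = 0"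
  "coord 5 (ebas 6) = 0" "coord 6 (ebas 6) = 1" "coord 7 (ebas 6) = 0"
  "coord 1 (ebas 7) = 0" "coord 2 (ebas 7) = 0" "coord 3 (ebas 7) = 0" "coord 4 (ebas 7) = 0"
  "coord 5 (ebas 7) = 0" "coord 6 (ebas 7) = 0" "coord 7 (ebas 7) = 1"
  by (simp_all add: coord_def ebas_def axis_def)

lemma nbr_coord:
  "coord 1 (nbr x y) = 0" "coord 2 (nbr x y) = 0" "coord 3 (nbr x y) = 0"
  "coord 4 (nbr x y) = coord 1 x * coord 2 y - coord 2 x * coord 1 y"
  "coord 5 (nbr x y) = coord 1 x * coord 3 y - coord 3 x * coord 1 y"
  "coord 6 (nbr x y) = coord 1 x * coord 4 y - coord 4 x * coord 1 y
     + coord 2 x * coord 3 y - coord 3 x * coord 2 y"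
  "coord 7 (nbr x y) = coord 1 x * coord 6 y - coord 6 x * coord 1 y
     + coord 2 x * coord 4 y - coord 4 x * coord 2 y
     + (coord 2 x * coord 5 y - coord 5 x * coord 2 y) / 2
     - (coord 3 x * coord 4 y - coord 4 x * coord 3 y) / 2"
  unfolding nbr_def coord_def sum7
  by (simp_all add: cbr_def cpos_def ebas_def axis_def field_simps)

lemma expand_ebas: "x = (\<Sum>m\<in>{1..7}. coord m x *\<^sub>R ebas m)"
  by (rule vec_eq7) (unfold all7 coord_sum sum7, simp)

lemma nbr_add_left: "nbr (x + y) z = nbr x z + nbr y z"
  by (rule vec_eq7) (unfold all7, simp add: nbr_coord field_simps)
lemma nbr_add_right: "nbr z (x + y) = nbr z x + nbr z y"
  by (rule vec_eq7) (unfold all7, simp add: nbr_coord field_simps)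
lemma nbr_scale_left: "nbr (c *\<^sub>R x) z = c *\<^sub>R nbr x z"
  by (rule vec_eq7) (unfold all7, simp add: nbr_coord field_simps)
lemma nbr_scale_right: "nbr z (c *\<^sub>R x) = c *\<^sub>R nbr z x"
  by (rule vec_eq7) (unfold all7, simp add: nbr_coord field_simps)
lemma nbr_antisym: "nbr y x = - nbr x y"
  by (rule vec_eq7) (unfold all7, simp add: nbr_coord field_simps)

lemma bilinear_nbr: "bilinear nbr"
  unfolding bilinear_def
  by (auto intro!: linearI simp: nbr_add_left nbr_add_right nbr_scale_left nbr_scale_right)


definition Fl :: "nat \<Rightarrow> (real^7) set" where
  "Fl i = {x. \<forall>k. 1 \<le> k \<and> k < i \<longrightarrow> coord k x = 0}"

lemma Fl_Suc: "x \<in> Fl (Suc i) \<longleftrightarrow> x \<in> Fl i \<and> (1 \<le> i \<longrightarrow> coord i x = 0)"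
  unfolding Fl_def using less_Suc_eq by auto

lemma Fl_1: "x \<in> Fl 1"
  unfolding Fl_def by auto

lemma Fl_0: "x \<in> Fl 0"
  unfolding Fl_def by auto

lemma Fl_simps:
  "x \<in> Fl 1"
  "x \<in> Fl 2 \<longleftrightarrow> coord 1 x = 0"
  "x \<in> Fl 3 \<longleftrightarrow> coord 1 x = 0 \<and> coord 2 x = 0"
  "x \<in> Fl 4 \<longleftrightarrow> coord 1 x = 0 \<and> coord 2 x = 0 \<and> coord 3 x = 0"
  "x \<in> Fl 5 \<longleftrightarrow> coord 1 x = 0 \<and> coord 2 x = 0 \<and> coord 3 x = 0 \<and> coord 4 x = 0"
  "x \<in> Fl 6 \<longleftrightarrow> coord 1 x = 0 \<and> coord 2 x = 0 \<and> coord 3 x = 0 \<and> coord 4 x = 0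
      \<and> coord 5 x = 0"
  "x \<in> Fl 7 \<longleftrightarrow> coord 1 x = 0 \<and> coord 2 x = 0 \<and> coord 3 x = 0 \<and> coord 4 x = 0
      \<and> coord 5 x = 0 \<and> coord 6 x = 0"
  "x \<in> Fl 8 \<longleftrightarrow> coord 1 x = 0 \<and> coord 2 x = 0 \<and> coord 3 x = 0 \<and> coord 4 x = 0
      \<and> coord 5 x = 0 \<and> coord 6 x = 0 \<and> coord 7 x = 0"
  by (simp_all add: Fl_0 Fl_Suc numeral_eq_Suc One_nat_def)


definition dg :: "nat \<Rightarrow> real" where
  "dg k = (if k = 1 then 1 else if k \<le> 3 then 2 else if k \<le> 5 then 3 else if k = 6 then 4 else 5)"

lemma deriv_flag:
  assumes der: "is_derivation nbr D"
  shows "\<forall>i\<in>{1..7}. \<forall>x\<in>Fl i. D x \<in> Fl i \<and>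
            D x - (coord 1 (D (ebas 1)) * dg i) *\<^sub>R x \<in> Fl (Suc i)"
proof -
  have lin: "linear D" and leib: "\<And>x y. D (nbr x y) = nbr (D x) y + nbr x (D y)"
    using der unfolding is_derivation_def by auto
  define M where "M k m = coord k (D (ebas m))" for k m
  have Dc: "coord r (D z) = (\<Sum>m\<in>{1..7}. coord m z * M r m)" for r z
  proof -
    have "D z = D (\<Sum>m\<in>{1..7}. coord m z *\<^sub>R ebas m)"
      using expand_ebas[of z] by simp
    also have "\<dots> = (\<Sum>m\<in>{1..7}. coord m z *\<^sub>R D (ebas m))"
      by (simp add: linear_sum[OF lin] linear_scale[OF lin])
    finally show ?thesis by (simp add: M_def)
  qed
  have Eq: "(\<Sum>m\<in>{1..7}. coord m (nbr (ebas p) (ebas q)) * M r m)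
     = coord r (nbr (D (ebas p)) (ebas q)) + coord r (nbr (ebas p) (D (ebas q)))" for p q r
    using leib[of "ebas p" "ebas q"] Dc[of r "nbr (ebas p) (ebas q)"] by simp
  note e121 = Eq[of 1 2 1, unfolded sum7 nbr_coord coord_ebas M_def[symmetric], simplified]
  note e122 = Eq[of 1 2 2, unfolded sum7 nbr_coord coord_ebas M_def[symmetric], simplified]
  note e123 = Eq[of 1 2 3, unfolded sum7 nbr_coord coord_ebas M_def[symmetric], simplified]
  note e124 = Eq[of 1 2 4, unfolded sum7 nbr_coord coord_ebas M_def[symmetric], simplified]
  note e125 = Eq[of 1 2 5, unfolded sum7 nbr_coord coord_ebas M_def[symmetric], simplified]
  note e131 = Eq[of 1 3 1, unfolded sum7 nbr_coord coord_ebas M_def[symmetric], simplified]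
  note e132 = Eq[of 1 3 2, unfolded sum7 nbr_coord coord_ebas M_def[symmetric], simplified]
  note e133 = Eq[of 1 3 3, unfolded sum7 nbr_coord coord_ebas M_def[symmetric], simplified]
  note e134 = Eq[of 1 3 4, unfolded sum7 nbr_coord coord_ebas M_def[symmetric], simplified]
  note e135 = Eq[of 1 3 5, unfolded sum7 nbr_coord coord_ebas M_def[symmetric], simplified]
  note e141 = Eq[of 1 4 1, unfolded sum7 nbr_coord coord_ebas M_def[symmetric], simplified]
  note e142 = Eq[of 1 4 2, unfolded sum7 nbr_coord coord_ebas M_def[symmetric], simplified]
  note e143 = Eq[of 1 4 3, unfolded sum7 nbr_coord coord_ebas M_def[symmetric], simplified]
  note e144 = Eq[of 1 4 4, unfolded sum7 nbr_coord coord_ebas M_def[symmetric], simplified]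
  note e145 = Eq[of 1 4 5, unfolded sum7 nbr_coord coord_ebas M_def[symmetric], simplified]
  note e146 = Eq[of 1 4 6, unfolded sum7 nbr_coord coord_ebas M_def[symmetric], simplified]
  note e156 = Eq[of 1 5 6, unfolded sum7 nbr_coord coord_ebas M_def[symmetric], simplified]
  note e161 = Eq[of 1 6 1, unfolded sum7 nbr_coord coord_ebas M_def[symmetric], simplified]
  note e162 = Eq[of 1 6 2, unfolded sum7 nbr_coord coord_ebas M_def[symmetric], simplified]
  note e163 = Eq[of 1 6 3, unfolded sum7 nbr_coord coord_ebas M_def[symmetric], simplified]
  note e164 = Eq[of 1 6 4, unfolded sum7 nbr_coord coord_ebas M_def[symmetric], simplified]
  note e165 = Eq[of 1 6 5, unfolded sum7 nbr_coord coord_ebas M_def[symmetric], simplified]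
  note e166 = Eq[of 1 6 6, unfolded sum7 nbr_coord coord_ebas M_def[symmetric], simplified]
  note e167 = Eq[of 1 6 7, unfolded sum7 nbr_coord coord_ebas M_def[symmetric], simplified]
  note e234 = Eq[of 2 3 4, unfolded sum7 nbr_coord coord_ebas M_def[symmetric], simplified]
  note e235 = Eq[of 2 3 5, unfolded sum7 nbr_coord coord_ebas M_def[symmetric], simplified]
  note e236 = Eq[of 2 3 6, unfolded sum7 nbr_coord coord_ebas M_def[symmetric], simplified]
  note e247 = Eq[of 2 4 7, unfolded sum7 nbr_coord coord_ebas M_def[symmetric], simplified]
  have MZ: "M 1 2 = 0" "M 1 3 = 0" "M 1 4 = 0" "M 1 5 = 0" "M 1 6 = 0" "M 1 7 = 0" "M 2 3 = 0" "M 2 4 = 0" "M 2 5 = 0" "M 2 6 = 0" "M 2 7 = 0" "M 3 4 = 0" "M 3 5 = 0" "M 3 6 = 0" "M 3 7 = 0" "M 4 5 = 0" "M 4 6 = 0" "M 4 7 = 0" "M 5 6 = 0" "M 5 7 = 0" "M 6 7 = 0"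
    using e121 e122 e123 e124 e125 e131 e132 e133 e134 e135 e141 e142 e143 e144 e145 e146 e156 e161 e162 e163 e164 e165 e166 e167 e234 e235 e236 e247 by linarith+
  have MD: "M 2 2 = 2 * M 1 1" "M 3 3 = 2 * M 1 1" "M 4 4 = 3 * M 1 1" "M 5 5 = 3 * M 1 1" "M 6 6 = 4 * M 1 1" "M 7 7 = 5 * M 1 1"
    using e121 e122 e123 e124 e125 e131 e132 e133 e134 e135 e141 e142 e143 e144 e145 e146 e156 e161 e162 e163 e164 e165 e166 e167 e234 e235 e236 e247 MZ by linarith+
  show ?thesis
    unfolding all7
    by (simp add: Fl_simps Dc sum7 MZ MD dg_def)
qed


context
  fixes ip :: "real^7 \<Rightarrow> real^7 \<Rightarrow> real"
  assumes IP: "is_inner_product ip"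
begin

lemma ip_bil: "bilinear ip" using IP unfolding is_inner_product_def by auto
lemma ip_sym: "ip x y = ip y x" using IP unfolding is_inner_product_def by auto
lemma ip_pos: "x \<noteq> 0 \<Longrightarrow> ip x x > 0" using IP unfolding is_inner_product_def by auto

lemma ip_ladd: "ip (x + y) z = ip x z + ip y z" by (rule bilinear_ladd[OF ip_bil])
lemma ip_radd: "ip z (x + y) = ip z x + ip z y" by (rule bilinear_radd[OF ip_bil])
lemma ip_lsub: "ip (x - y) z = ip x z - ip y z" by (rule bilinear_lsub[OF ip_bil])
lemma ip_rsub: "ip z (x - y) = ip z x - ip z y" by (rule bilinear_rsub[OF ip_bil])
lemma ip_lscale: "ip (c *\<^sub>R x) z = c * ip x z" using bilinear_lmul[OF ip_bil] by simp
lemma ip_rscale: "ip z (c *\<^sub>R x) = c * ip z x" using bilinear_rmul[OF ip_bil] by simp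
lemma ip_lneg: "ip (- x) z = - ip x z" by (rule bilinear_lneg[OF ip_bil])
lemma ip_rneg: "ip z (- x) = - ip z x" by (rule bilinear_rneg[OF ip_bil])
lemma ip_lzero: "ip 0 z = 0" by (rule bilinear_lzero[OF ip_bil])
lemma ip_rzero: "ip z 0 = 0" by (rule bilinear_rzero[OF ip_bil])
lemma ip_lsum: "ip (sum f S) z = (\<Sum>i\<in>S. ip (f i) z)"
proof -
  interpret l: linear "\<lambda>x. ip x z" using ip_bil by (simp add: bilinear_def)
  show ?thesis by (rule l.sum)
qed
lemma ip_rsum: "ip z (sum f S) = (\<Sum>i\<in>S. ip z (f i))"
proof -
  interpret l: linear "\<lambda>x. ip z x" using ip_bil by (simp add: bilinear_def)
  show ?thesis by (rule l.sum)
qed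

lemmas ip_simps = ip_ladd ip_radd ip_lsub ip_rsub ip_lscale ip_rscale ip_lneg ip_rneg
  ip_lzero ip_rzero ip_lsum ip_rsum

lemma ip_self_zero: "ip x x = 0 \<Longrightarrow> x = 0"
  using ip_pos by fastforce

end

lemma Fl_mono: "a \<le> b \<Longrightarrow> x \<in> Fl b \<Longrightarrow> x \<in> Fl a"
  unfolding Fl_def by auto

lemma Fl_add: "x \<in> Fl i \<Longrightarrow> y \<in> Fl i \<Longrightarrow> x + y \<in> Fl i"
  and Fl_diff: "x \<in> Fl i \<Longrightarrow> y \<in> Fl i \<Longrightarrow> x - y \<in> Fl i"
  and Fl_scale: "x \<in> Fl i \<Longrightarrow> c *\<^sub>R x \<in> Fl i"
  and Fl_zero: "0 \<in> Fl i"
  unfolding Fl_def by auto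

lemma Fl_sum: "(\<And>k. k \<in> S \<Longrightarrow> f k \<in> Fl i) \<Longrightarrow> sum f S \<in> Fl i"
  unfolding Fl_def by auto

lemma Fl8: "x \<in> Fl 8 \<Longrightarrow> x = 0"
  by (rule vec_eq7) (unfold all7, simp add: Fl_simps)

lemma coord_ebas_gen: "k \<in> {1..7} \<Longrightarrow> n \<in> {1..7} \<Longrightarrow> coord k (ebas n) = (if k = n then 1 else 0)"
proof -
  have "\<forall>k\<in>{1..7}. \<forall>n\<in>{1..7}. coord k (ebas n) = (if k = n then 1 else 0)"
    unfolding all7 by simp
  then show "k \<in> {1..7} \<Longrightarrow> n \<in> {1..7} \<Longrightarrow> ?thesis" by blast
qed

lemma ebas_Fl: "n \<in> {1..7} \<Longrightarrow> ebas n \<in> Fl n"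
  unfolding Fl_def using coord_ebas_gen by auto

lemma ebas_coord_self: "n \<in> {1..7} \<Longrightarrow> coord n (ebas n) = 1"
  using coord_ebas_gen by auto

lemma Fl_coord_zero: "x \<in> Fl k \<Longrightarrow> 1 \<le> n \<Longrightarrow> n < k \<Longrightarrow> coord n x = 0"
  unfolding Fl_def by auto


definition ONF :: "(real^7 \<Rightarrow> real^7 \<Rightarrow> real) \<Rightarrow> (nat \<Rightarrow> real^7) \<Rightarrow> nat \<Rightarrow> bool" where
  "ONF ip u m \<longleftrightarrow>
     (\<forall>i\<in>{m..7}. \<forall>j\<in>{m..7}. ip (u i) (u j) = (if i = j then 1 else 0)) \<and>
     (\<forall>i\<in>{m..7}. u i \<in> Fl i) \<and>
     (\<forall>m'\<in>{m..8}. \<forall>x\<in>Fl m'. x = (\<Sum>k\<in>{m'..7}. ip x (u k) *\<^sub>R u k))"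

lemma GS_step:
  assumes IP: "is_inner_product ip" and n1: "1 \<le> n" and n8: "n < 8"
    and P: "ONF ip u (Suc n)"
  shows "\<exists>u'. ONF ip u' n"
proof -
  have on: "\<And>i j. i\<in>{Suc n..7} \<Longrightarrow> j\<in>{Suc n..7} \<Longrightarrow> ip (u i) (u j) = (if i = j then 1 else 0)"
    and ufl: "\<And>i. i\<in>{Suc n..7} \<Longrightarrow> u i \<in> Fl i"
    and ex: "\<And>m' x. m'\<in>{Suc n..8} \<Longrightarrow> x\<in>Fl m' \<Longrightarrow> x = (\<Sum>k\<in>{m'..7}. ip x (u k) *\<^sub>R u k)"
    using P unfolding ONF_def by auto
  have n7: "n \<in> {1..7}" using n1 n8 by auto
  define e where "e = ebas n"
  define v where "v = e - (\<Sum>k\<in>{Suc n..7}. ip e (u k) *\<^sub>R u k)"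
  have eF: "e \<in> Fl n" using ebas_Fl[OF n7] e_def by simp
  have ukF: "u k \<in> Fl n" if "k \<in> {Suc n..7}" for k
    using Fl_mono[of n k] ufl[OF that] that by auto
  have vF: "v \<in> Fl n" unfolding v_def
    by (intro Fl_diff eF Fl_sum Fl_scale ukF)
  have cu: "coord n (u k) = 0" if "k \<in> {Suc n..7}" for k
    using Fl_coord_zero[OF ufl[OF that], of n] that n1 by auto
  have cv: "coord n v = 1"
    unfolding v_def using cu ebas_coord_self[OF n7] e_def by simp
  have v0: "v \<noteq> 0" using cv by auto
  have pv: "ip v v > 0" using ip_pos[OF IP v0] .
  have ipvu: "ip v (u j) = 0" if j: "j \<in> {Suc n..7}" for j
  proof -
    have "ip v (u j) = ip e (u j) - (\<Sum>k\<in>{Suc n..7}. ip e (u k) * ip (u k) (u j))"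
      unfolding v_def by (simp add: ip_simps[OF IP])
    also have "(\<Sum>k\<in>{Suc n..7}. ip e (u k) * ip (u k) (u j)) =
               (\<Sum>k\<in>{Suc n..7}. if k = j then ip e (u k) else 0)"
      by (rule sum.cong) (auto simp: on[OF _ j])
    also have "\<dots> = ip e (u j)" using j by simp
    finally show ?thesis by simp
  qed
  define s where "s = sqrt (ip v v)"
  have s0: "s > 0" using pv s_def by simp
  have ss: "s * s = ip v v" using pv s_def by (simp add: real_sqrt_mult_self)
  define w where "w = (1 / s) *\<^sub>R v"
  define u' where "u' = u(n := w)"
  have u'n: "u' n = w" and u'k: "\<And>k. k \<noteq> n \<Longrightarrow> u' k = u k" unfolding u'_def by auto
  have ipwu: "ip w (u j) = 0" if "j \<in> {Suc n..7}" for j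
    unfolding w_def using ipvu[OF that] by (simp add: ip_simps[OF IP])
  have ipww: "ip w w = 1"
    unfolding w_def using s0 ss pv by (simp add: ip_simps[OF IP] field_simps)
  have I1: "\<forall>i\<in>{n..7}. \<forall>j\<in>{n..7}. ip (u' i) (u' j) = (if i = j then 1 else 0)"
  proof (intro ballI)
    fix i j assume i: "i \<in> {n..7}" and j: "j \<in> {n..7}"
    consider "i = n" "j = n" | "i = n" "j \<noteq> n" | "i \<noteq> n" "j = n" | "i \<noteq> n" "j \<noteq> n" by blast
    then show "ip (u' i) (u' j) = (if i = j then 1 else 0)"
    proof cases
      case 1 then show ?thesis using ipww u'n by simp
    next
      case 2 then show ?thesis using ipwu[of j] j u'n u'k[of j] by auto
    next
      case 3 then show ?thesis using ipwu[of i] i u'n u'k[of i] ip_sym[OF IP, of w "u i"] by auto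
    next
      case 4 then show ?thesis using on[of i j] i j u'k by auto
    qed
  qed
  have I2: "\<forall>i\<in>{n..7}. u' i \<in> Fl i"
  proof
    fix i assume i: "i \<in> {n..7}"
    show "u' i \<in> Fl i"
    proof (cases "i = n")
      case True then show ?thesis using u'n vF w_def Fl_scale by simp
    next
      case False then show ?thesis using u'k ufl i by auto
    qed
  qed
  have sumeq: "(\<Sum>k\<in>{m'..7}. ip x (u' k) *\<^sub>R u' k) = (\<Sum>k\<in>{m'..7}. ip x (u k) *\<^sub>R u k)"
    if "Suc n \<le> m'" for m' x
    by (rule sum.cong) (use that u'k in auto)
  have I3: "\<forall>m'\<in>{n..8}. \<forall>x\<in>Fl m'. x = (\<Sum>k\<in>{m'..7}. ip x (u' k) *\<^sub>R u' k)"
  proof (intro ballI)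
    fix m' x assume m': "m' \<in> {n..8}" and x: "x \<in> Fl m'"
    show "x = (\<Sum>k\<in>{m'..7}. ip x (u' k) *\<^sub>R u' k)"
    proof (cases "m' = n")
      case False
      then have "Suc n \<le> m'" using m' by auto
      then show ?thesis using ex[of m' x] x m' sumeq by auto
    next
      case True
      then have xF: "x \<in> Fl n" using x by simp
      define y where "y = x - coord n x *\<^sub>R v"
      have yF: "y \<in> Fl (Suc n)"
        unfolding Fl_Suc y_def using xF vF cv by (auto intro: Fl_diff Fl_scale)
      have yex: "y = (\<Sum>k\<in>{Suc n..7}. ip y (u k) *\<^sub>R u k)"
        using ex[of "Suc n" y] yF n8 by auto
      have ipyv: "ip y v = 0"
      proof -
        have "ip y v = (\<Sum>k\<in>{Suc n..7}. ip y (u k) * ip (u k) v)"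
          by (subst yex) (simp add: ip_simps[OF IP])
        also have "\<dots> = 0"
          by (rule sum.neutral) (use ipvu ip_sym[OF IP] in auto)
        finally show ?thesis .
      qed
      have xy: "x = coord n x *\<^sub>R v + y" unfolding y_def by simp
      have ipxu: "ip x (u k) = ip y (u k)" if "k \<in> {Suc n..7}" for k
        by (subst xy) (simp add: ip_simps[OF IP] ipvu[OF that])
      have ipxv: "ip x v = coord n x * ip v v"
        using ipyv ip_sym[OF IP, of y v] by (subst xy) (simp add: ip_simps[OF IP])
      have "(\<Sum>k\<in>{n..7}. ip x (u' k) *\<^sub>R u' k) =
            ip x w *\<^sub>R w + (\<Sum>k\<in>{Suc n..7}. ip x (u' k) *\<^sub>R u' k)"
        using n8 by (simp add: Icc_eq_insert_lb_nat u'n)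
      also have "(\<Sum>k\<in>{Suc n..7}. ip x (u' k) *\<^sub>R u' k) = (\<Sum>k\<in>{Suc n..7}. ip y (u k) *\<^sub>R u k)"
        by (rule sum.cong) (auto simp: u'k ipxu)
      also have "ip x w *\<^sub>R w = coord n x *\<^sub>R v"
        unfolding w_def using s0 ss ipxv pv by (simp add: ip_simps[OF IP] field_simps)
      finally show ?thesis using True xy yex by simp
    qed
  qed
  show ?thesis using I1 I2 I3 unfolding ONF_def by blast
qed

lemma GS_all:
  assumes IP: "is_inner_product ip"
  shows "m \<le> 8 \<Longrightarrow> 1 \<le> m \<Longrightarrow> \<exists>u. ONF ip u m"
proof (induction m rule: inc_induct)
  case base
  have "ONF ip (\<lambda>_. 0) 8" unfolding ONF_def using Fl8 by auto
  then show ?case by blast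
next
  case (step n)
  then obtain u where "ONF ip u (Suc n)" by auto
  then show ?case using GS_step[OF IP step(4)] step(2) by blast
qed

lemma GS:
  assumes IP: "is_inner_product ip"
  shows "\<exists>u. ONF ip u 1"
  using GS_all[OF IP] by auto


definition mm0 :: "nat \<Rightarrow> nat \<Rightarrow> nat" where
  "mm0 i j = (if i = 1 then (if j \<le> 2 then 4 else if j = 3 then 5 else if j = 4 then 6
                              else if j \<le> 6 then 7 else 8)
              else if i = 2 then (if j \<le> 3 then 6 else if j \<le> 5 then 7 else 8)
              else if i = 3 then (if j \<le> 4 then 7 else 8)
              else 8)"

definition mm :: "nat \<Rightarrow> nat \<Rightarrow> nat" where
  "mm i j = (if i \<le> j then mm0 i j else mm0 j i)"

definition GG :: "(nat \<Rightarrow> nat \<Rightarrow> nat \<Rightarrow> real) \<Rightarrow> nat \<Rightarrow> nat \<Rightarrow> nat \<Rightarrow> real" where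
  "GG mu a b c = (mu a b c - mu b c a + mu c a b) / 2"


lemma bracket_flag:
  assumes "i \<in> {1..7}" "j \<in> {1..7}" "x \<in> Fl i" "y \<in> Fl j"
  shows "nbr x y \<in> Fl (mm i j)"
proof -
  have "\<forall>i\<in>{1..7}. \<forall>j\<in>{1..7}. \<forall>x\<in>Fl i. \<forall>y\<in>Fl j. nbr x y \<in> Fl (mm i j)"
    unfolding all7 by (simp add: Fl_simps nbr_coord mm_def mm0_def)
  then show ?thesis using assms by blast
qed


definition KK :: "(real^7 \<Rightarrow> real^7 \<Rightarrow> real) \<Rightarrow> real^7 \<Rightarrow> real^7 \<Rightarrow> real^7 \<Rightarrow> real" where
  "KK ip X Y Z = (ip (nbr X Y) Z - ip (nbr Y Z) X + ip (nbr Z X) Y) / 2"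

lemma nbr_lsum: "nbr (sum f S) z = (\<Sum>i\<in>S. nbr (f i) z)"
proof -
  interpret l: linear "\<lambda>x. nbr x z" using bilinear_nbr by (simp add: bilinear_def)
  show ?thesis by (rule l.sum)
qed
lemma nbr_rsum: "nbr z (sum f S) = (\<Sum>i\<in>S. nbr z (f i))"
proof -
  interpret l: linear "\<lambda>x. nbr z x" using bilinear_nbr by (simp add: bilinear_def)
  show ?thesis by (rule l.sum)
qed
lemma nbr_lsub: "nbr (x - y) z = nbr x z - nbr y z"
  by (rule bilinear_lsub[OF bilinear_nbr])
lemma nbr_rsub: "nbr z (x - y) = nbr z x - nbr z y"
  by (rule bilinear_rsub[OF bilinear_nbr])

lemmas nbr_simps = nbr_add_left nbr_add_right nbr_scale_left nbr_scale_right nbr_lsum nbr_rsum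
  nbr_lsub nbr_rsub

context
  fixes ip :: "real^7 \<Rightarrow> real^7 \<Rightarrow> real" and u :: "nat \<Rightarrow> real^7"
  assumes IP: "is_inner_product ip" and ONF: "ONF ip u 1"
begin

lemma orth: "i \<in> {1..7} \<Longrightarrow> j \<in> {1..7} \<Longrightarrow> ip (u i) (u j) = (if i = j then 1 else 0)"
  using ONF unfolding ONF_def by auto

lemma ufl: "i \<in> {1..7} \<Longrightarrow> u i \<in> Fl i"
  using ONF unfolding ONF_def by auto

lemma expandF: "m \<in> {1..8} \<Longrightarrow> x \<in> Fl m \<Longrightarrow> x = (\<Sum>k\<in>{m..7}. ip x (u k) *\<^sub>R u k)"
  using ONF unfolding ONF_def by auto

lemma expand: "x = (\<Sum>k\<in>{1..7}. ip x (u k) *\<^sub>R u k)"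
  using expandF[of 1 x] Fl_1 by auto

lemmas ips = ip_simps[OF IP]

lemma parseval: "ip x y = (\<Sum>k\<in>{1..7}. ip x (u k) * ip y (u k))"
proof -
  have "ip x y = ip x (\<Sum>k\<in>{1..7}. ip y (u k) *\<^sub>R u k)" using expand[of y] by simp
  also have "\<dots> = (\<Sum>k\<in>{1..7}. ip x (u k) * ip y (u k))" by (simp add: ips mult.commute)
  finally show ?thesis .
qed

lemma KK_lin1: "linear (\<lambda>X. KK ip X Y Z)"
  by (rule linearI) (simp_all add: KK_def nbr_simps ips field_simps)
lemma KK_lin2: "linear (\<lambda>Y. KK ip X Y Z)"
  by (rule linearI) (simp_all add: KK_def nbr_simps ips field_simps)
lemma KK_lin3: "linear (\<lambda>Z. KK ip X Y Z)"
  by (rule linearI) (simp_all add: KK_def nbr_simps ips field_simps)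

lemma KK_sum1: "KK ip (\<Sum>k\<in>S. c k *\<^sub>R v k) Y Z = (\<Sum>k\<in>S. c k * KK ip (v k) Y Z)"
  by (simp add: linear_sum[OF KK_lin1] linear_scale[OF KK_lin1])
lemma KK_sum2: "KK ip X (\<Sum>k\<in>S. c k *\<^sub>R v k) Z = (\<Sum>k\<in>S. c k * KK ip X (v k) Z)"
  by (simp add: linear_sum[OF KK_lin2] linear_scale[OF KK_lin2])
lemma KK_sum3: "KK ip X Y (\<Sum>k\<in>S. c k *\<^sub>R v k) = (\<Sum>k\<in>S. c k * KK ip X Y (v k))"
  by (simp add: linear_sum[OF KK_lin3] linear_scale[OF KK_lin3])

lemma conn: "lc_conn nbr ip X Y = (\<Sum>k\<in>{1..7}. KK ip X Y (u k) *\<^sub>R u k)"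
proof -
  define W where "W = (\<Sum>k\<in>{1..7}. KK ip X Y (u k) *\<^sub>R u k)"
  have PW: "ip W Z = (ip (nbr X Y) Z - ip (nbr Y Z) X + ip (nbr Z X) Y) / 2" for Z
  proof -
    have "ip W Z = (\<Sum>k\<in>{1..7}. KK ip X Y (u k) * ip (u k) Z)"
      unfolding W_def by (simp add: ips)
    also have "\<dots> = (\<Sum>k\<in>{1..7}. ip Z (u k) * KK ip X Y (u k))"
      by (rule sum.cong) (simp_all add: ip_sym[OF IP, of Z])
    also have "\<dots> = KK ip X Y (\<Sum>k\<in>{1..7}. ip Z (u k) *\<^sub>R u k)"
      by (simp add: KK_sum3)
    also have "\<dots> = KK ip X Y Z" using expand[of Z] by simp
    finally show ?thesis unfolding KK_def .
  qed
  have U: "W' = W" if "\<forall>Z. ip W' Z = (ip (nbr X Y) Z - ip (nbr Y Z) X + ip (nbr Z X) Y) / 2" for W'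
  proof -
    have "ip (W' - W) Z = 0" for Z using spec[OF that, of Z] PW[of Z] by (simp add: ips)
    then show ?thesis using ip_self_zero[OF IP, of "W' - W"] by simp
  qed
  show ?thesis unfolding lc_conn_def W_def[symmetric]
    by (rule the_equality) (use PW U in auto)
qed

lemma ipconn: "ip (lc_conn nbr ip X Y) Z = KK ip X Y Z"
proof -
  have "ip (lc_conn nbr ip X Y) Z = (\<Sum>k\<in>{1..7}. KK ip X Y (u k) * ip (u k) Z)"
    unfolding conn by (simp add: ips)
  also have "\<dots> = (\<Sum>k\<in>{1..7}. ip Z (u k) * KK ip X Y (u k))"
    by (rule sum.cong) (simp_all add: ip_sym[OF IP, of Z])
  also have "\<dots> = KK ip X Y (\<Sum>k\<in>{1..7}. ip Z (u k) *\<^sub>R u k)"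
    by (simp add: KK_sum3)
  also have "\<dots> = KK ip X Y Z" using expand[of Z] by simp
  finally show ?thesis .
qed

lemma conn_ladd: "lc_conn nbr ip (X1 + X2) Y = lc_conn nbr ip X1 Y + lc_conn nbr ip X2 Y"
  and conn_lscale: "lc_conn nbr ip (c *\<^sub>R X) Y = c *\<^sub>R lc_conn nbr ip X Y"
  and conn_radd: "lc_conn nbr ip Y (X1 + X2) = lc_conn nbr ip Y X1 + lc_conn nbr ip Y X2"
  and conn_rscale: "lc_conn nbr ip Y (c *\<^sub>R X) = c *\<^sub>R lc_conn nbr ip Y X"
  unfolding conn
  by (simp_all add: linear_add[OF KK_lin1] linear_scale[OF KK_lin1]
      linear_add[OF KK_lin2] linear_scale[OF KK_lin2]
      scaleR_add_left sum.distrib scaleR_sum_right)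

lemma curv_lin: "linear (\<lambda>X. curv nbr ip X Y Z)"
  by (rule linearI) (simp_all add: curv_def conn_ladd conn_lscale conn_radd conn_rscale
      nbr_add_left nbr_scale_left algebra_simps)

lemma trace_onb:
  assumes lf: "linear f"
  shows "trace_op f = (\<Sum>j\<in>{1..7}. ip (f (u j)) (u j))"
proof -
  have "trace_op f = (\<Sum>i\<in>UNIV. f (axis i 1) $ i)" unfolding trace_op_def ..
  also have "\<dots> = (\<Sum>i\<in>UNIV. \<Sum>j\<in>{1..7}. ip (axis i 1) (u j) * (f (u j) $ i))"
  proof (rule sum.cong)
    fix i :: 7
    have "f (axis i 1) = f (\<Sum>j\<in>{1..7}. ip (axis i 1) (u j) *\<^sub>R u j)"
      using expand[of "axis i 1"] by simp
    also have "\<dots> = (\<Sum>j\<in>{1..7}. ip (axis i 1) (u j) *\<^sub>R f (u j))"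
      by (simp add: linear_sum[OF lf] linear_scale[OF lf])
    finally show "f (axis i 1) $ i = (\<Sum>j\<in>{1..7}. ip (axis i 1) (u j) * (f (u j) $ i))"
      by (simp add: sum_component)
  qed simp
  also have "\<dots> = (\<Sum>j\<in>{1..7}. \<Sum>i\<in>UNIV. (f (u j) $ i) * ip (axis i 1) (u j))"
    by (subst sum.swap) (simp add: mult.commute)
  also have "\<dots> = (\<Sum>j\<in>{1..7}. ip (\<Sum>i\<in>UNIV. (f (u j) $ i) *\<^sub>R axis i 1) (u j))"
    by (simp add: ips)
  also have "\<dots> = (\<Sum>j\<in>{1..7}. ip (f (u j)) (u j))"
    using basis_expansion[of "f (u _)"] by (simp add: scalar_mult_eq_scaleR)
  finally show ?thesis .
qed

lemma ric_formula:
  "ric_tensor nbr ip Y Z = (\<Sum>i\<in>{1..7}. KK ip (u i) (lc_conn nbr ip Y Z) (u i)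
      - KK ip Y (lc_conn nbr ip (u i) Z) (u i) - KK ip (nbr (u i) Y) Z (u i))"
proof -
  have "ric_tensor nbr ip Y Z = (\<Sum>j\<in>{1..7}. ip (curv nbr ip (u j) Y Z) (u j))"
    unfolding ric_tensor_def by (rule trace_onb[OF curv_lin])
  also have "\<dots> = (\<Sum>i\<in>{1..7}. KK ip (u i) (lc_conn nbr ip Y Z) (u i)
      - KK ip Y (lc_conn nbr ip (u i) Z) (u i) - KK ip (nbr (u i) Y) Z (u i))"
    unfolding curv_def by (simp add: ips ipconn)
  finally show ?thesis .
qed

end


lemma ric_poly:
  fixes mu :: "nat \<Rightarrow> nat \<Rightarrow> nat \<Rightarrow> real"
  assumes anti: "\<And>i j k. i < j \<Longrightarrow> mu j i k = - mu i j k"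
    and diag: "\<And>i k. mu i i k = 0"
    and zero: "\<And>i j k. i \<in> {1..7} \<Longrightarrow> j \<in> {1..7} \<Longrightarrow> k \<in> {1..7} \<Longrightarrow> k < mm i j \<Longrightarrow> mu i j k = 0"
  shows "\<forall>l\<in>{1..7}. \<forall>j\<in>{1..7}.
    (\<Sum>i\<in>{1..7}. (\<Sum>k\<in>{1..7}. GG mu l j k * GG mu i k i) - (\<Sum>k\<in>{1..7}. GG mu i j k * GG mu l k i)
        - (\<Sum>m\<in>{1..7}. mu i l m * GG mu m j i))
    = (\<Sum>i\<in>{1..7}. \<Sum>p\<in>{1..7}. mu i p l * mu i p j) / 4 - (\<Sum>p\<in>{1..7}. \<Sum>k\<in>{1..7}. mu l p k * mu j p k) / 2"
  unfolding all7 sum7 GG_def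
  by (simp add: anti diag zero mm_def mm0_def field_simps)


definition muf :: "(real^7 \<Rightarrow> real^7 \<Rightarrow> real) \<Rightarrow> (nat \<Rightarrow> real^7) \<Rightarrow> nat \<Rightarrow> nat \<Rightarrow> nat \<Rightarrow> real" where
  "muf ip u i j k = ip (nbr (u i) (u j)) (u k)"

context
  fixes ip :: "real^7 \<Rightarrow> real^7 \<Rightarrow> real" and u :: "nat \<Rightarrow> real^7"
  assumes IP: "is_inner_product ip" and ONF: "ONF ip u 1"
begin

lemmas ips' = ip_simps[OF IP]

lemma KK_basis: "KK ip (u a) (u b) (u c) = GG (muf ip u) a b c"
  unfolding KK_def GG_def muf_def ..

lemma mu_anti: "muf ip u j i k = - muf ip u i j k"
  unfolding muf_def by (subst nbr_antisym) (simp add: ips')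

lemma mu_diag: "muf ip u i i k = 0"
  using mu_anti[of i i k] by simp

lemma ip_Fl_zero:
  assumes k: "k \<in> {1..7}" and y: "y \<in> Fl (Suc k)"
  shows "ip y (u k) = 0"
proof -
  have "y = (\<Sum>k'\<in>{Suc k..7}. ip y (u k') *\<^sub>R u k')"
    using expandF[OF IP ONF, of "Suc k" y] k y by auto
  then have "ip y (u k) = (\<Sum>k'\<in>{Suc k..7}. ip y (u k') * ip (u k') (u k))"
    by (metis (no_types, lifting) ips'(5) ips'(11) sum.cong)
  also have "\<dots> = 0"
    by (rule sum.neutral) (use k orth[OF IP ONF] in auto)
  finally show ?thesis .
qed

lemma mu_zero:
  assumes "i \<in> {1..7}" "j \<in> {1..7}" "k \<in> {1..7}" "k < mm i j"
  shows "muf ip u i j k = 0"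
proof -
  have "nbr (u i) (u j) \<in> Fl (mm i j)"
    using bracket_flag assms ufl[OF IP ONF] by blast
  then have "nbr (u i) (u j) \<in> Fl (Suc k)"
    using Fl_mono[of "Suc k" "mm i j"] assms by auto
  then show ?thesis unfolding muf_def using ip_Fl_zero assms by blast
qed

lemma ric_basis_raw:
  "ric_tensor nbr ip (u l) (u j) =
    (\<Sum>i\<in>{1..7}. (\<Sum>k\<in>{1..7}. GG (muf ip u) l j k * GG (muf ip u) i k i)
        - (\<Sum>k\<in>{1..7}. GG (muf ip u) i j k * GG (muf ip u) l k i)
        - (\<Sum>m\<in>{1..7}. muf ip u i l m * GG (muf ip u) m j i))"
proof -
  have t3: "nbr (u i) (u l) = (\<Sum>m\<in>{1..7}. muf ip u i l m *\<^sub>R u m)" for i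
    unfolding muf_def by (rule expand[OF IP ONF])
  show ?thesis
    unfolding ric_formula[OF IP ONF] conn[OF IP ONF] t3
    by (simp add: KK_sum1[OF IP ONF] KK_sum2[OF IP ONF] KK_basis)
qed

lemma ric_basis:
  assumes "l \<in> {1..7}" "j \<in> {1..7}"
  shows "ric_tensor nbr ip (u l) (u j) =
    (\<Sum>i\<in>{1..7}. \<Sum>p\<in>{1..7}. muf ip u i p l * muf ip u i p j) / 4
     - (\<Sum>p\<in>{1..7}. \<Sum>k\<in>{1..7}. muf ip u l p k * muf ip u j p k) / 2"
  using ric_poly[of "muf ip u", OF mu_anti mu_diag mu_zero] assms ric_basis_raw by auto

lemma KK_add1: "KK ip (X1 + X2) Y Z = KK ip X1 Y Z + KK ip X2 Y Z"
  and KK_scale1: "KK ip (c *\<^sub>R X) Y Z = c * KK ip X Y Z"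
  and KK_add2: "KK ip X (Y1 + Y2) Z = KK ip X Y1 Z + KK ip X Y2 Z"
  and KK_scale2: "KK ip X (c *\<^sub>R Y) Z = c * KK ip X Y Z"
  using linear_add[OF KK_lin1[OF IP ONF]] linear_scale[OF KK_lin1[OF IP ONF]]
    linear_add[OF KK_lin2[OF IP ONF]] linear_scale[OF KK_lin2[OF IP ONF]] by auto

lemma ric_lin: "linear (\<lambda>Y. ric_tensor nbr ip Y Z)"
  by (rule linearI) (simp_all add: ric_formula[OF IP ONF] conn_ladd[OF IP ONF] conn_lscale[OF IP ONF]
     KK_add1 KK_scale1 KK_add2 KK_scale2 nbr_add_right nbr_scale_right
     sum.distrib[symmetric] sum_distrib_left algebra_simps)

end


context
  fixes ip :: "real^7 \<Rightarrow> real^7 \<Rightarrow> real" and u :: "nat \<Rightarrow> real^7"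
  assumes IP: "is_inner_product ip" and ONF: "ONF ip u 1"
begin

lemmas ipz = ip_simps[OF IP]

lemma swap3: "(\<Sum>a\<in>A. \<Sum>b\<in>B. \<Sum>c\<in>C. f a b c) = (\<Sum>b\<in>B. \<Sum>c\<in>C. \<Sum>a\<in>A. f a b c)"
  by (subst sum.swap) (rule sum.cong[OF refl], rule sum.swap)

lemma deriv_trace_zero:
  assumes der: "is_derivation nbr D"
  shows "(\<Sum>j\<in>{1..7}. ric_tensor nbr ip (D (u j)) (u j)) = 0"
proof -
  have lin: "linear D" and leib: "\<And>x y. D (nbr x y) = nbr (D x) y + nbr x (D y)"
    using der unfolding is_derivation_def by auto
  let ?mu = "muf ip u"
  let ?S = "{1..7::nat}"
  define Dm where "Dm l j = ip (D (u j)) (u l)" for l j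
  have r1: "ric_tensor nbr ip (D (u j)) (u j) = (\<Sum>l\<in>?S. Dm l j * ric_tensor nbr ip (u l) (u j))" for j
  proof -
    have "ric_tensor nbr ip (D (u j)) (u j) = ric_tensor nbr ip (\<Sum>l\<in>?S. Dm l j *\<^sub>R u l) (u j)"
      unfolding Dm_def using expand[OF IP ONF, of "D (u j)"] by simp
    also have "\<dots> = (\<Sum>l\<in>?S. Dm l j * ric_tensor nbr ip (u l) (u j))"
      by (simp add: linear_sum[OF ric_lin[OF IP ONF]] linear_scale[OF ric_lin[OF IP ONF]])
    finally show ?thesis .
  qed
  define A where "A l j = (\<Sum>i\<in>?S. \<Sum>p\<in>?S. ?mu i p l * ?mu i p j)" for l j
  define B where "B l j = (\<Sum>p\<in>?S. \<Sum>k\<in>?S. ?mu l p k * ?mu j p k)" for l j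
  have r2a: "(\<Sum>j\<in>?S. ric_tensor nbr ip (D (u j)) (u j)) =
      (\<Sum>j\<in>?S. \<Sum>l\<in>?S. Dm l j * A l j / 4 - Dm l j * B l j / 2)"
    unfolding r1 A_def B_def
    by (intro sum.cong refl) (auto simp: ric_basis[OF IP ONF] right_diff_distrib)
  have r2: "(\<Sum>j\<in>?S. ric_tensor nbr ip (D (u j)) (u j)) =
      (\<Sum>j\<in>?S. \<Sum>l\<in>?S. Dm l j * A l j) / 4 - (\<Sum>j\<in>?S. \<Sum>l\<in>?S. Dm l j * B l j) / 2"
    unfolding r2a by (simp add: sum_subtractf sum_divide_distrib)
  have pv: "ip x y = (\<Sum>k\<in>?S. ip x (u k) * ip y (u k))" for x y
    by (rule parseval[OF IP ONF])
  have T1: "(\<Sum>j\<in>?S. \<Sum>l\<in>?S. Dm l j * A l j) =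
      (\<Sum>i\<in>?S. \<Sum>p\<in>?S. ip (D (nbr (u i) (u p))) (nbr (u i) (u p)))"
  proof -
    have "(\<Sum>j\<in>?S. \<Sum>l\<in>?S. Dm l j * A l j) =
        (\<Sum>j\<in>?S. \<Sum>l\<in>?S. \<Sum>i\<in>?S. \<Sum>p\<in>?S. ?mu i p j * (Dm l j * ?mu i p l))"
      unfolding A_def by (simp add: sum_distrib_left mult_ac)
    also have "\<dots> = (\<Sum>j\<in>?S. \<Sum>i\<in>?S. \<Sum>p\<in>?S. \<Sum>l\<in>?S. ?mu i p j * (Dm l j * ?mu i p l))"
      by (rule sum.cong[OF refl], rule swap3)
    also have "\<dots> = (\<Sum>i\<in>?S. \<Sum>p\<in>?S. \<Sum>j\<in>?S. \<Sum>l\<in>?S. ?mu i p j * (Dm l j * ?mu i p l))"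
      by (rule swap3)
    also have "\<dots> = (\<Sum>i\<in>?S. \<Sum>p\<in>?S. \<Sum>j\<in>?S. ?mu i p j * (\<Sum>l\<in>?S. Dm l j * ?mu i p l))"
      by (simp add: sum_distrib_left)
    also have "\<dots> = (\<Sum>i\<in>?S. \<Sum>p\<in>?S. \<Sum>j\<in>?S. ?mu i p j * ip (D (u j)) (nbr (u i) (u p)))"
    proof (intro sum.cong refl)
      fix i p j
      show "?mu i p j * (\<Sum>l\<in>?S. Dm l j * ?mu i p l) = ?mu i p j * ip (D (u j)) (nbr (u i) (u p))"
        using pv[of "D (u j)" "nbr (u i) (u p)"] unfolding Dm_def muf_def by simp
    qed
    also have "\<dots> = (\<Sum>i\<in>?S. \<Sum>p\<in>?S. ip (D (nbr (u i) (u p))) (nbr (u i) (u p)))"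
    proof (intro sum.cong refl)
      fix i p
      have "D (nbr (u i) (u p)) = D (\<Sum>j\<in>?S. ?mu i p j *\<^sub>R u j)"
        unfolding muf_def using expand[OF IP ONF, of "nbr (u i) (u p)"] by simp
      also have "\<dots> = (\<Sum>j\<in>?S. ?mu i p j *\<^sub>R D (u j))"
        by (simp add: linear_sum[OF lin] linear_scale[OF lin])
      finally show "(\<Sum>j\<in>?S. ?mu i p j * ip (D (u j)) (nbr (u i) (u p))) =
          ip (D (nbr (u i) (u p))) (nbr (u i) (u p))"
        by (simp add: ipz)
    qed
    finally show ?thesis .
  qed
  have T2: "(\<Sum>j\<in>?S. \<Sum>l\<in>?S. Dm l j * B l j) =
      (\<Sum>j\<in>?S. \<Sum>p\<in>?S. ip (nbr (D (u j)) (u p)) (nbr (u j) (u p)))"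
  proof -
    have "(\<Sum>j\<in>?S. \<Sum>l\<in>?S. Dm l j * B l j) =
        (\<Sum>j\<in>?S. \<Sum>l\<in>?S. \<Sum>p\<in>?S. \<Sum>k\<in>?S. ?mu j p k * (Dm l j * ?mu l p k))"
      unfolding B_def by (simp add: sum_distrib_left mult_ac)
    also have "\<dots> = (\<Sum>j\<in>?S. \<Sum>p\<in>?S. \<Sum>k\<in>?S. \<Sum>l\<in>?S. ?mu j p k * (Dm l j * ?mu l p k))"
      by (rule sum.cong[OF refl], rule swap3)
    also have "\<dots> = (\<Sum>j\<in>?S. \<Sum>p\<in>?S. \<Sum>k\<in>?S. ?mu j p k * (\<Sum>l\<in>?S. Dm l j * ?mu l p k))"
      by (simp add: sum_distrib_left)
    also have "\<dots> = (\<Sum>j\<in>?S. \<Sum>p\<in>?S. \<Sum>k\<in>?S. ?mu j p k * ip (nbr (D (u j)) (u p)) (u k))"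
    proof (intro sum.cong refl)
      fix j p k
      have "nbr (D (u j)) (u p) = nbr (\<Sum>l\<in>?S. Dm l j *\<^sub>R u l) (u p)"
        unfolding Dm_def using expand[OF IP ONF, of "D (u j)"] by simp
      then have "ip (nbr (D (u j)) (u p)) (u k) = (\<Sum>l\<in>?S. Dm l j * ?mu l p k)"
        by (simp add: nbr_simps ipz muf_def)
      then show "?mu j p k * (\<Sum>l\<in>?S. Dm l j * ?mu l p k) =
           ?mu j p k * ip (nbr (D (u j)) (u p)) (u k)" by simp
    qed
    also have "\<dots> = (\<Sum>j\<in>?S. \<Sum>p\<in>?S. ip (nbr (D (u j)) (u p)) (nbr (u j) (u p)))"
    proof (intro sum.cong refl)
      fix j p
      show "(\<Sum>k\<in>?S. ?mu j p k * ip (nbr (D (u j)) (u p)) (u k)) =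
          ip (nbr (D (u j)) (u p)) (nbr (u j) (u p))"
        using pv[of "nbr (D (u j)) (u p)" "nbr (u j) (u p)"] unfolding muf_def
        by (simp add: mult.commute)
    qed
    finally show ?thesis .
  qed
  have T12: "(\<Sum>i\<in>?S. \<Sum>p\<in>?S. ip (D (nbr (u i) (u p))) (nbr (u i) (u p))) =
      2 * (\<Sum>j\<in>?S. \<Sum>p\<in>?S. ip (nbr (D (u j)) (u p)) (nbr (u j) (u p)))"
  proof -
    have "(\<Sum>i\<in>?S. \<Sum>p\<in>?S. ip (D (nbr (u i) (u p))) (nbr (u i) (u p))) =
        (\<Sum>i\<in>?S. \<Sum>p\<in>?S. ip (nbr (D (u i)) (u p)) (nbr (u i) (u p)))
        + (\<Sum>i\<in>?S. \<Sum>p\<in>?S. ip (nbr (u i) (D (u p))) (nbr (u i) (u p)))"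
      by (simp add: leib ipz sum.distrib)
    also have "(\<Sum>i\<in>?S. \<Sum>p\<in>?S. ip (nbr (u i) (D (u p))) (nbr (u i) (u p))) =
        (\<Sum>i\<in>?S. \<Sum>p\<in>?S. ip (nbr (D (u p)) (u i)) (nbr (u p) (u i)))"
      by (rule sum.cong[OF refl], rule sum.cong[OF refl])
         (metis ipz(7) ipz(8) minus_minus nbr_antisym)
    also have "\<dots> = (\<Sum>p\<in>?S. \<Sum>i\<in>?S. ip (nbr (D (u p)) (u i)) (nbr (u p) (u i)))"
      by (rule sum.swap)
    finally show ?thesis by simp
  qed
  show ?thesis using r2 T1 T2 T12 by simp
qed

end


lemma sum47: "sum f {4..7::nat} = f 4 + f 5 + f 6 + f 7"
  by (simp add: numeral_eq_Suc add.assoc One_nat_def)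

context
  fixes ip :: "real^7 \<Rightarrow> real^7 \<Rightarrow> real" and u :: "nat \<Rightarrow> real^7"
  assumes IP: "is_inner_product ip" and ONF: "ONF ip u 1"
begin

lemma mu_anti_ord: "i < j \<Longrightarrow> muf ip u j i k = - muf ip u i j k"
  by (rule mu_anti[OF IP ONF])

lemma ric_trace_I:
  "(\<Sum>j\<in>{1..7}. ric_tensor nbr ip (u j) (u j)) = - ((muf ip u 1 2 4)\<^sup>2 + (muf ip u 1 2 5)\<^sup>2 + (muf ip u 1 2 6)\<^sup>2 + (muf ip u 1 2 7)\<^sup>2 + (muf ip u 1 3 5)\<^sup>2 + (muf ip u 1 3 6)\<^sup>2 + (muf ip u 1 3 7)\<^sup>2 + (muf ip u 1 4 6)\<^sup>2 + (muf ip u 1 4 7)\<^sup>2 + (muf ip u 1 5 7)\<^sup>2 + (muf ip u 1 6 7)\<^sup>2 + (muf ip u 2 3 6)\<^sup>2 + (muf ip u 2 3 7)\<^sup>2 + (muf ip u 2 4 7)\<^sup>2 + (muf ip u 2 5 7)\<^sup>2 + (muf ip u 3 4 7)\<^sup>2) / 2"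
  unfolding sum7
  by (simp add: ric_basis[OF IP ONF] sum7 mu_anti_ord mu_diag[OF IP ONF] mu_zero[OF IP ONF]
      mm_def mm0_def power2_eq_square field_simps)

lemma ric_trace_A:
  "ric_tensor nbr ip (u 1) (u 1) + ric_tensor nbr ip (u 2) (u 2) + 2 * ric_tensor nbr ip (u 3) (u 3)
   + 2 * ric_tensor nbr ip (u 4) (u 4) + 3 * ric_tensor nbr ip (u 5) (u 5)
   + 3 * ric_tensor nbr ip (u 6) (u 6) + 4 * ric_tensor nbr ip (u 7) (u 7)
   = ((muf ip u 1 2 5)\<^sup>2 + (muf ip u 1 2 6)\<^sup>2 + 2 * (muf ip u 1 2 7)\<^sup>2 + (muf ip u 1 3 7)\<^sup>2 + (muf ip u 1 4 7)\<^sup>2 + (muf ip u 2 3 7)\<^sup>2 + (muf ip u 2 4 7)\<^sup>2) / 2"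
  by (simp add: ric_basis[OF IP ONF] sum7 mu_anti_ord mu_diag[OF IP ONF] mu_zero[OF IP ONF]
      mm_def mm0_def power2_eq_square field_simps)

lemma coord_self_nz: "i \<in> {1..7} \<Longrightarrow> coord i (u i) \<noteq> 0"
proof
  assume i: "i \<in> {1..7}" and c: "coord i (u i) = 0"
  have "u i \<in> Fl (Suc i)" using ufl[OF IP ONF i] c i unfolding Fl_Suc by auto
  then have "ip (u i) (u i) = 0" using ip_Fl_zero[OF IP ONF i] by blast
  then show False using orth[OF IP ONF i i] by simp
qed

lemma mu124: "muf ip u 1 2 4 \<noteq> 0"
proof
  assume z: "muf ip u 1 2 4 = 0"
  define X where "X = nbr (u 1) (u 2)"
  have u1: "u 1 \<in> Fl 1" and u2: "u 2 \<in> Fl 2" using ufl[OF IP ONF] by auto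
  have c12: "coord 1 (u 2) = 0" using u2 by (simp add: Fl_simps)
  have c4: "coord 4 X = coord 1 (u 1) * coord 2 (u 2)" unfolding X_def by (simp add: nbr_coord c12)
  have nz: "coord 4 X \<noteq> 0" using c4 coord_self_nz[of 1] coord_self_nz[of 2] by simp
  have XF: "X \<in> Fl 4" unfolding X_def using bracket_flag[OF _ _ u1 u2] by (simp add: mm_def mm0_def)
  have m4: "(4::nat) \<in> {1..8}" by simp
  have "coord 4 X = coord 4 (\<Sum>k\<in>{4..7}. ip X (u k) *\<^sub>R u k)"
    using expandF[OF IP ONF m4 XF] by (rule arg_cong)
  also have "\<dots> = (\<Sum>k\<in>{4..7}. ip X (u k) * coord 4 (u k))"
    by (simp only: coord_sum coord_scale)
  also have "\<dots> = ip X (u 4) * coord 4 (u 4)"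
  proof -
    have "coord 4 (u 5) = 0" "coord 4 (u 6) = 0" "coord 4 (u 7) = 0"
      using ufl[OF IP ONF, of 5] ufl[OF IP ONF, of 6] ufl[OF IP ONF, of 7] by (auto simp: Fl_simps)
    then show ?thesis by (simp add: sum47)
  qed
  finally show False using z nz unfolding X_def muf_def by simp
qed

end

theorem mainTheorem5:
  shows "\<not> einstein_nilradical nbr"
proof
  assume "einstein_nilradical nbr"
  then obtain ip where IP: "is_inner_product ip" and NS: "is_nilsoliton nbr ip"
    unfolding einstein_nilradical_def by auto
  then obtain c D where der: "is_derivation nbr D"
    and R: "\<And>Y Z. ric_tensor nbr ip Y Z = ip (c *\<^sub>R Y + D Y) Z"
    unfolding is_nilsoliton_def by auto
  obtain u where ONF: "ONF ip u 1" using GS[OF IP] by auto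
  have lin: "linear D" using der unfolding is_derivation_def by auto
  define t where "t = coord 1 (D (ebas 1))"
  have DF: "\<forall>i\<in>{1..7}. \<forall>x\<in>Fl i. D x \<in> Fl i \<and> D x - (t * dg i) *\<^sub>R x \<in> Fl (Suc i)"
    using deriv_flag[OF der] unfolding t_def .
  note ips = ip_simps[OF IP]
  have d12: "ip (D (u i)) (u i) = t * dg i \<and> ip (D (D (u i))) (u i) = (t * dg i)\<^sup>2"
    if i: "i \<in> {1..7}" for i
  proof -
    define s where "s = t * dg i"
    define y where "y = D (u i) - s *\<^sub>R u i"
    have ui: "u i \<in> Fl i" using ufl[OF IP ONF i] .
    have yF: "y \<in> Fl (Suc i)" using DF i ui unfolding y_def s_def by blast
    have uu: "ip (u i) (u i) = 1" using orth[OF IP ONF i i] by simp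
    have iy: "ip y (u i) = 0" using ip_Fl_zero[OF IP ONF i yF] .
    have Du: "D (u i) = y + s *\<^sub>R u i" unfolding y_def by simp
    have "ip (D (u i)) (u i) = ip y (u i) + s * ip (u i) (u i)" by (simp add: Du ips)
    then have h1: "ip (D (u i)) (u i) = s" using iy uu by simp
    have DyF: "D y \<in> Fl (Suc i)"
    proof (cases "i = 7")
      case True
      then have "y = 0" using yF Fl8 by simp
      then show ?thesis using linear_0[OF lin] Fl_zero by simp
    next
      case False
      then have "Suc i \<in> {1..7}" using i by auto
      then show ?thesis using DF yF by blast
    qed
    have iDy: "ip (D y) (u i) = 0" using ip_Fl_zero[OF IP ONF i DyF] .
    have "D (D (u i)) = D (y + s *\<^sub>R u i)" by (rule arg_cong[OF Du])
    also have "\<dots> = D y + s *\<^sub>R D (u i)"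
      by (simp add: linear_add[OF lin] linear_scale[OF lin])
    finally have "D (D (u i)) = D y + s *\<^sub>R D (u i)" .
    then have h2: "ip (D (D (u i))) (u i) = s\<^sup>2"
      using iDy h1 by (simp add: ips power2_eq_square)
    show ?thesis using h1 h2 s_def by simp
  qed
  have ricd: "ric_tensor nbr ip (u j) (u j) = c + t * dg j" if j: "j \<in> {1..7}" for j
    using R[of "u j" "u j"] d12[OF j] orth[OF IP ONF j j] by (simp add: ips)
  have ricD: "ric_tensor nbr ip (D (u j)) (u j) = c * (t * dg j) + (t * dg j)\<^sup>2"
    if j: "j \<in> {1..7}" for j
    using R[of "D (u j)" "u j"] d12[OF j] by (simp add: ips)
  have hD: "20 * c * t + 68 * t\<^sup>2 = 0"
  proof -
    have "(\<Sum>j\<in>{1..7}. ric_tensor nbr ip (D (u j)) (u j)) = 0"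
      by (rule deriv_trace_zero[OF IP ONF der])
    also have "(\<Sum>j\<in>{1..7}. ric_tensor nbr ip (D (u j)) (u j)) =
       (\<Sum>j\<in>{1..7}. c * (t * dg j) + (t * dg j)\<^sup>2)"
      by (rule sum.cong) (auto simp: ricD)
    finally show ?thesis unfolding sum7 by (simp add: dg_def power2_eq_square algebra_simps)
  qed
  let ?M = "muf ip u"
  have hI: "7 * c + 20 * t = - ((?M 1 2 4)\<^sup>2 + (?M 1 2 5)\<^sup>2 + (?M 1 2 6)\<^sup>2 + (?M 1 2 7)\<^sup>2 + (?M 1 3 5)\<^sup>2 + (?M 1 3 6)\<^sup>2 + (?M 1 3 7)\<^sup>2 + (?M 1 4 6)\<^sup>2 + (?M 1 4 7)\<^sup>2 + (?M 1 5 7)\<^sup>2 + (?M 1 6 7)\<^sup>2 + (?M 2 3 6)\<^sup>2 + (?M 2 3 7)\<^sup>2 + (?M 2 4 7)\<^sup>2 + (?M 2 5 7)\<^sup>2 + (?M 3 4 7)\<^sup>2) / 2"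
  proof -
    have "(\<Sum>j\<in>{1..7}. ric_tensor nbr ip (u j) (u j)) = (\<Sum>j\<in>{1..7}. c + t * dg j)"
      by (rule sum.cong) (auto simp: ricd)
    then show ?thesis using ric_trace_I[OF IP ONF] unfolding sum7 by (simp add: dg_def)
  qed
  have hA: "16 * c + 54 * t = ((?M 1 2 5)\<^sup>2 + (?M 1 2 6)\<^sup>2 + 2 * (?M 1 2 7)\<^sup>2 + (?M 1 3 7)\<^sup>2 + (?M 1 4 7)\<^sup>2 + (?M 2 3 7)\<^sup>2 + (?M 2 4 7)\<^sup>2) / 2"
    using ric_trace_A[OF IP ONF] ricd[of 1] ricd[of 2] ricd[of 3] ricd[of 4] ricd[of 5]
      ricd[of 6] ricd[of 7] by (simp add: dg_def)
  have Spos: "0 < (?M 1 2 4)\<^sup>2 + (?M 1 2 5)\<^sup>2 + (?M 1 2 6)\<^sup>2 + (?M 1 2 7)\<^sup>2 + (?M 1 3 5)\<^sup>2 + (?M 1 3 6)\<^sup>2 + (?M 1 3 7)\<^sup>2 + (?M 1 4 6)\<^sup>2 + (?M 1 4 7)\<^sup>2 + (?M 1 5 7)\<^sup>2 + (?M 1 6 7)\<^sup>2 + (?M 2 3 6)\<^sup>2 + (?M 2 3 7)\<^sup>2 + (?M 2 4 7)\<^sup>2 + (?M 2 5 7)\<^sup>2 + (?M 3 4 7)\<^sup>2"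
  proof -
    have "0 < (?M 1 2 4)\<^sup>2" using mu124[OF IP ONF] by simp
    then show ?thesis by (simp add: add_pos_nonneg)
  qed
  have Anon: "0 \<le> (?M 1 2 5)\<^sup>2 + (?M 1 2 6)\<^sup>2 + 2 * (?M 1 2 7)\<^sup>2 + (?M 1 3 7)\<^sup>2 + (?M 1 4 7)\<^sup>2 + (?M 2 3 7)\<^sup>2 + (?M 2 4 7)\<^sup>2" by simp
  have I': "7 * c + 20 * t < 0"
  proof -
    have "\<And>a b. a = - b / 2 \<Longrightarrow> 0 < b \<Longrightarrow> a < (0::real)" by simp
    then show ?thesis using hI Spos by blast
  qed
  have A': "0 \<le> 16 * c + 54 * t"
  proof -
    have "\<And>a b. a = b / 2 \<Longrightarrow> 0 \<le> b \<Longrightarrow> 0 \<le> (a::real)" by simp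
    then show ?thesis using hA Anon by blast
  qed
  show False
  proof (cases "t = 0")
    case True
    then show ?thesis using I' A' by simp
  next
    case False
    have "t * (20 * c + 68 * t) = 0" using hD by (simp add: power2_eq_square algebra_simps)
    then have "20 * c + 68 * t = 0" using False by simp
    then show ?thesis using I' A' by linarith
  qed
qed


end
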